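(* Let $n\geqslant 3$ and $N=2^n-1$. Let $\mathcal{A}_0$ be the set of $(\mathbf{x}';(z_h)_{1\leqslant h\leqslant N})$ with $x'_i\in\mathbb{Z}$, $z_h\in\mathbb{N}$ (positive integers) if $s(h)>1$ and $z_h\in\mathbb{Z}\smallsetminus\{0\}$ if $s(h)=1$, satisfying $$\sum_{i=1}^n x'_i\prod_{\substack{1\leqslant h\leqslant N,\ h\neq N\\ s(h)\geqslant 2}}z_h^{1-\varepsilon_i(h)}=0,$$ the coprimality condition $\gcd(z_N,x'_1z_1,x'_2z_2,\dots,x'_nz_{2^{n-1}})=1$, and such that $(z_h)$ is reduced. Then the map $$(\mathbf{x}';(z_h))\longmapsto\Big(z_1x'_1,\dots,z_{2^{n-1}}x'_n,\ \prod_h z_h^{\varepsilon_1(h)},\dots,\prod_h z_h^{\varepsilon_n(h)}\Big)$$ is a bijection from $\mathcal{A}_0$ onto the set of $(x_1,\dots,x_n,y_1,\dots,y_n)\in\mathbb{Z}^{2n}$ with $y_1\cdots y_n\neq 0$, $\sum_{i=1}^nx_i\prod_{j\neq i}y_j=0$ and $\gcd(x_1,\dots,x_n,y_1,\dots,y_n)=1$. Moreover, for elements $(\mathbf{x}';(z_h))$ satisfying the other conditions defining $\mathcal{A}_0$, the condition $\gcd(z_N,x'_1z_1,\dots,x'_nz_{2^{n-1}})=1$ is equivalent to $\gcd(x_1,\dots,x_n,y_1,\dots,y_n)=1$ for the image.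
   Context: For $h\in\{1,\dots,N\}$ write $h=\sum_j\varepsilon_j(h)2^{j-1}$ with $\varepsilon_j(h)\in\{0,1\}$ and $s(h)=\sum_j\varepsilon_j(h)$; $h\preceq\ell$ means $\varepsilon_j(h)\leqslant\varepsilon_j(\ell)$ for all $j$. The tuple $(z_h)$ is reduced if $\gcd(z_h,z_\ell)=1$ whenever $h,\ell$ are $\preceq$-incomparable. $z_{2^{j-1}}$ denotes the entry with index $h=2^{j-1}$. *)

theory Defs
  imports Main
begin

text \<open>Binary digits: h = sum_j eps j h * 2^(j-1), j >= 1.\<close>
definition eps :: "nat \<Rightarrow> nat \<Rightarrow> nat" where
  "eps j h = (h div 2 ^ (j - 1)) mod 2"

text \<open>Number of binary digits equal to 1 among the first n digits (for h <= 2^n - 1 this is s(h)).\<close>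
definition s :: "nat \<Rightarrow> nat \<Rightarrow> nat" where
  "s n h = (\<Sum>j\<in>{1..n}. eps j h)"

definition bprec :: "nat \<Rightarrow> nat \<Rightarrow> nat \<Rightarrow> bool" where
  "bprec n h l \<longleftrightarrow> (\<forall>j\<in>{1..n}. eps j h \<le> eps j l)"

definition reduced :: "nat \<Rightarrow> (nat \<Rightarrow> int) \<Rightarrow> bool" where
  "reduced n z \<longleftrightarrow> (\<forall>h\<in>{1..2^n-1}. \<forall>l\<in>{1..2^n-1}.
      \<not> bprec n h l \<and> \<not> bprec n l h \<longrightarrow> gcd (z h) (z l) = 1)"

text \<open>Tuples (x'; (z_h)) are pairs of functions, zero outside the index ranges {1..n}, {1..N}.
  All conditions defining A_0 except the gcd condition.\<close>
definition A0_pre :: "nat \<Rightarrow> (nat \<Rightarrow> int) \<Rightarrow> (nat \<Rightarrow> int) \<Rightarrow> bool" where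
  "A0_pre n x' z \<longleftrightarrow>
     (\<forall>i. i \<notin> {1..n} \<longrightarrow> x' i = 0) \<and>
     (\<forall>h. h \<notin> {1..2^n-1} \<longrightarrow> z h = 0) \<and>
     (\<forall>h\<in>{1..2^n-1}. s n h > 1 \<longrightarrow> z h > 0) \<and>
     (\<forall>h\<in>{1..2^n-1}. s n h = 1 \<longrightarrow> z h \<noteq> 0) \<and>
     (\<Sum>i\<in>{1..n}. x' i * (\<Prod>h\<in>{h\<in>{1..2^n-1}. h \<noteq> 2^n-1 \<and> s n h \<ge> 2}.
          z h ^ (1 - eps i h))) = 0 \<and>
     reduced n z"

definition A0_gcd :: "nat \<Rightarrow> (nat \<Rightarrow> int) \<Rightarrow> (nat \<Rightarrow> int) \<Rightarrow> bool" where
  "A0_gcd n x' z \<longleftrightarrow>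
     Gcd ({z (2^n-1)} \<union> (\<lambda>i. x' i * z (2^(i-1))) ` {1..n}) = 1"

definition A0 :: "nat \<Rightarrow> ((nat \<Rightarrow> int) \<times> (nat \<Rightarrow> int)) set" where
  "A0 n = {(x', z). A0_pre n x' z \<and> A0_gcd n x' z}"

definition phi :: "nat \<Rightarrow> (nat \<Rightarrow> int) \<times> (nat \<Rightarrow> int) \<Rightarrow> (nat \<Rightarrow> int) \<times> (nat \<Rightarrow> int)" where
  "phi n p = (case p of (x', z) \<Rightarrow>
     ((\<lambda>i. if i \<in> {1..n} then z (2^(i-1)) * x' i else 0),
      (\<lambda>i. if i \<in> {1..n} then (\<Prod>h\<in>{1..2^n-1}. z h ^ eps i h) else 0)))"

definition B :: "nat \<Rightarrow> ((nat \<Rightarrow> int) \<times> (nat \<Rightarrow> int)) set" where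
  "B n = {(x, y).
     (\<forall>i. i \<notin> {1..n} \<longrightarrow> x i = 0 \<and> y i = 0) \<and>
     (\<Prod>i\<in>{1..n}. y i) \<noteq> 0 \<and>
     (\<Sum>i\<in>{1..n}. x i * (\<Prod>j\<in>{1..n} - {i}. y j)) = 0 \<and>
     Gcd (x ` {1..n} \<union> y ` {1..n}) = 1}"

end

theory Submission
  imports Defs "HOL-Computational_Algebra.Primes"
begin
lemma eps_le1: "eps j h \<le> 1"
  unfolding eps_def by simp

lemma eps_01: "eps j h = 0 \<or> eps j h = 1"
  unfolding eps_def by auto

lemma eps_1: "eps 1 h = h mod 2"
  unfolding eps_def by simp

lemma eps_1': "eps (Suc 0) h = h mod 2"
  unfolding eps_def by simp

lemma eps_Suc: "j \<ge> 1 \<Longrightarrow> eps (Suc j) h = eps j (h div 2)"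
  unfolding eps_def
  by (metis Suc_diff_le diff_Suc_1 div_mult2_eq mult.commute power_Suc)

lemma eps_zero: "eps j 0 = 0"
  unfolding eps_def by simp

lemma bits_inj_aux:
  "h < 2^n \<Longrightarrow> l < 2^n \<Longrightarrow> (\<forall>j\<in>{1..n}. eps j h = eps j l) \<Longrightarrow> h = l"
proof (induction n arbitrary: h l)
  case 0
  then show ?case by simp
next
  case (Suc n)
  have "h div 2 < 2^n" "l div 2 < 2^n" using Suc.prems by auto
  moreover have "\<forall>j\<in>{1..n}. eps j (h div 2) = eps j (l div 2)"
  proof
    fix j assume j: "j \<in> {1..n}"
    then have "eps (Suc j) h = eps (Suc j) l" using Suc.prems(3) by auto
    then show "eps j (h div 2) = eps j (l div 2)" using j eps_Suc by auto
  qed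
  ultimately have "h div 2 = l div 2" using Suc.IH by blast
  moreover have "eps 1 h = eps 1 l" using Suc.prems(3) by simp
  then have "h mod 2 = l mod 2" by (simp add: eps_1')
  ultimately show ?case by (metis div_mult_mod_eq)
qed

lemma bits_surj_aux:
  "S \<subseteq> {1..n} \<Longrightarrow> \<exists>h<2^n. \<forall>j\<in>{1..n}. eps j h = (if j \<in> S then 1 else 0)"
proof (induction n arbitrary: S)
  case 0
  then show ?case by simp
next
  case (Suc n)
  define S' where "S' = {j\<in>{1..n}. Suc j \<in> S}"
  have "S' \<subseteq> {1..n}" by (auto simp: S'_def)
  then obtain h' where h': "h' < 2^n" "\<forall>j\<in>{1..n}. eps j h' = (if j \<in> S' then 1 else 0)"
    using Suc.IH by blast
  define h where "h = 2 * h' + (if 1 \<in> S then 1 else 0)"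
  have hd: "h div 2 = h'" by (simp add: h_def)
  have hm: "h mod 2 = (if 1 \<in> S then 1 else 0)" by (simp add: h_def)
  have "h < 2^Suc n" using h' by (auto simp: h_def)
  moreover have "\<forall>j\<in>{1..Suc n}. eps j h = (if j \<in> S then 1 else 0)"
  proof
    fix j assume j: "j \<in> {1..Suc n}"
    show "eps j h = (if j \<in> S then 1 else 0)"
    proof (cases "j = 1")
      case True
      then show ?thesis using hm eps_1 by simp
    next
      case False
      then obtain k where k: "j = Suc k" "k \<in> {1..n}" using j
        by (intro that[of "j - 1"]) auto
      then have "eps j h = eps k h'" using eps_Suc hd by auto
      then show ?thesis using h'(2) k by (auto simp: S'_def)
    qed
  qed
  ultimately show ?case by blast
qed

lemma eps_all_ones: "j \<in> {1..n} \<Longrightarrow> eps j (2^n - 1) = 1"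
proof (induction n arbitrary: j)
  case 0
  then show ?case by simp
next
  case (Suc n)
  have p: "(2::nat)^n \<ge> 1" by simp
  have e: "(2::nat)^Suc n - 1 = 1 + 2*(2^n - 1)" using p by (cases "(2::nat)^n") auto
  have d: "(2^Suc n - 1) div 2 = (2^n - 1::nat)" using e by simp
  show ?case
  proof (cases "j = 1")
    case True
    then show ?thesis by (simp only: eps_1 e) simp
  next
    case False
    then obtain k where k: "j = Suc k" "k \<in> {1..n}" using Suc.prems
      by (intro that[of "j - 1"]) auto
    then show ?thesis using eps_Suc d Suc.IH by auto
  qed
qed

lemma eps_pow2: "i \<ge> 1 \<Longrightarrow> j \<ge> 1 \<Longrightarrow> eps i (2^(j-1)) = (if i = j then 1 else 0)"
proof -
  assume i: "i \<ge> 1" and j: "j \<ge> 1"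
  show ?thesis
  proof (cases "i - 1 \<le> j - 1")
    case True
    then have "(2::nat)^(j-1) div 2^(i-1) = 2^(j-1-(i-1))"
      using power_diff[of "2::nat" "i-1" "j-1"] by simp
    show ?thesis
    proof (cases "i = j")
      case True
      then show ?thesis unfolding eps_def by simp
    next
      case False
      have "j - 1 - (i - 1) \<ge> 1" using \<open>i - 1 \<le> j - 1\<close> i j False by linarith
      then have "even ((2::nat)^(j-1-(i-1)))" by simp
      then show ?thesis using False \<open>(2::nat)^(j-1) div 2^(i-1) = 2^(j-1-(i-1))\<close>
        unfolding eps_def by simp
    qed
  next
    case False
    then have "(2::nat)^(j-1) < 2^(i-1)" by simp
    then show ?thesis using False unfolding eps_def by auto
  qed
qed

definition bits :: "nat \<Rightarrow> nat \<Rightarrow> nat set" where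
  "bits n h = {j\<in>{1..n}. eps j h = 1}"

lemma bits_sub: "bits n h \<subseteq> {1..n}"
  unfolding bits_def by auto

lemma finite_bits: "finite (bits n h)"
  using finite_subset[OF bits_sub] by blast

lemma eps_iff: "j \<in> {1..n} \<Longrightarrow> eps j h = (if j \<in> bits n h then 1 else 0)"
  unfolding bits_def using eps_01[of j h] by auto

lemma bits_inj: "h < 2^n \<Longrightarrow> l < 2^n \<Longrightarrow> bits n h = bits n l \<Longrightarrow> h = l"
  by (rule bits_inj_aux) (auto simp: eps_iff[of _ n])

lemma bits_ne: "h \<in> {1..2^n-1} \<Longrightarrow> bits n h \<noteq> {}"
proof
  assume h: "h \<in> {1..2^n-1}" and e: "bits n h = {}"
  have "bits n 0 = {}" by (simp add: bits_def eps_zero)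
  with e have "h = 0" using h by (intro bits_inj[of h n 0]) auto
  with h show False by simp
qed

lemma H_lt: "h \<in> {1..2^n-1} \<Longrightarrow> h < (2::nat)^n"
proof -
  assume "h \<in> {1..2^n-1}"
  moreover have "(2::nat)^n > 0" by simp
  ultimately show ?thesis by auto
qed

lemma bits_surj: "S \<subseteq> {1..n} \<Longrightarrow> S \<noteq> {} \<Longrightarrow> \<exists>h\<in>{1..2^n-1}. bits n h = S"
proof -
  assume S: "S \<subseteq> {1..n}" "S \<noteq> {}"
  obtain h where h: "h < 2^n" "\<forall>j\<in>{1..n}. eps j h = (if j \<in> S then 1 else 0)"
    using bits_surj_aux[OF S(1)] by blast
  have "x \<in> bits n h \<longleftrightarrow> x \<in> S" for x
  proof (cases "x \<in> {1..n}")
    case True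
    have e: "eps x h = (if x \<in> S then 1 else 0)" by (rule bspec[OF h(2) True])
    show ?thesis
    proof (cases "x \<in> S")
      case True2: True
      then have "eps x h = 1" using e by simp
      then show ?thesis using True True2 unfolding bits_def by blast
    next
      case False2: False
      then have "eps x h = 0" using e by simp
      then show ?thesis using False2 unfolding bits_def by auto
    qed
  next
    case False
    then have "x \<notin> S" using S(1) by blast
    then show ?thesis using False unfolding bits_def by blast
  qed
  then have b: "bits n h = S" by blast
  have b0: "bits n 0 = {}" by (simp add: bits_def eps_zero)
  have "h \<noteq> 0"
  proof
    assume "h = 0"
    then have "S = {}" using b b0 by simp
    then show False using S(2) by simp
  qed
  then have "1 \<le> h" by simp
  moreover have "h \<le> 2^n - 1" using h(1) by linarith
  ultimately have "h \<in> {1..2^n-1}" by simp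
  then show ?thesis using b by blast
qed

lemma pow_in_H: "j \<in> {1..n} \<Longrightarrow> (2::nat)^(j-1) \<in> {1..2^n-1}"
proof -
  assume j: "j \<in> {1..n}"
  then have "j - 1 < n" by auto
  then have lt: "(2::nat)^(j-1) < 2^n" using power_strict_increasing[of "j-1" n "2::nat"] by simp
  have "(1::nat) \<le> 2^(j-1)" by simp
  moreover have "(2::nat)^(j-1) \<le> 2^n - 1" using lt by arith
  ultimately show ?thesis by simp
qed

lemma bits_pow: "j \<in> {1..n} \<Longrightarrow> bits n (2^(j-1)) = {j}"
proof -
  assume j: "j \<in> {1..n}"
  have "x \<in> bits n (2^(j-1)) \<longleftrightarrow> x = j" for x
  proof (cases "x \<in> {1..n}")
    case True
    then have "eps x (2^(j-1)) = (if x = j then 1 else 0)" using j by (intro eps_pow2) auto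
    then show ?thesis using True by (simp add: bits_def)
  next
    case False
    then show ?thesis using j by (auto simp: bits_def)
  qed
  then show ?thesis by blast
qed

lemma N_in_H: "n \<ge> 1 \<Longrightarrow> (2::nat)^n - 1 \<in> {1..2^n-1}"
proof -
  assume "n \<ge> 1"
  then have "(2::nat)^n \<ge> 2^1" by (intro power_increasing) auto
  then show ?thesis by simp
qed

lemma bits_N: "bits n (2^n - 1) = {1..n}"
  unfolding bits_def using eps_all_ones[of _ n] by blast

lemma bprec_iff: "bprec n h l \<longleftrightarrow> bits n h \<subseteq> bits n l"
proof
  assume bp: "bprec n h l"
  show "bits n h \<subseteq> bits n l"
  proof
    fix j assume "j \<in> bits n h"
    then have j: "j\<in>{1..n}" "eps j h = 1" unfolding bits_def by blast+
    with bp have "eps j h \<le> eps j l" unfolding bprec_def by blast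
    with j eps_le1[of j l] have "eps j l = 1" by linarith
    then show "j \<in> bits n l" using j(1) unfolding bits_def by blast
  qed
next
  assume a: "bits n h \<subseteq> bits n l"
  show "bprec n h l" unfolding bprec_def
  proof
    fix j assume j: "j \<in> {1..n}"
    show "eps j h \<le> eps j l"
    proof (cases "eps j h = 1")
      case True
      then have "j \<in> bits n h" using j unfolding bits_def by blast
      then have "j \<in> bits n l" using a by blast
      then have "eps j l = 1" unfolding bits_def by blast
      then show ?thesis using eps_le1[of j h] by simp
    next
      case False
      then show ?thesis using eps_01[of j h] by simp
    qed
  qed
qed

lemma s_card: "s n h = card (bits n h)"
proof -
  have "s n h = (\<Sum>j\<in>{1..n}. if j \<in> bits n h then 1 else 0)"
    unfolding s_def by (intro sum.cong refl) (simp add: eps_iff)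
  also have "\<dots> = card {j\<in>{1..n}. j \<in> bits n h}"
    using sum.inter_filter[of "{1..n}" "\<lambda>_. 1::nat" "\<lambda>j. j \<in> bits n h"] by simp
  also have "{j\<in>{1..n}. j \<in> bits n h} = bits n h" using bits_sub[of n h] by blast
  finally show ?thesis .
qed

lemma prod_eps: "i \<in> {1..n} \<Longrightarrow>
  (\<Prod>h\<in>{1..2^n-1}. (f h :: 'a::comm_monoid_mult) ^ eps i h) = (\<Prod>h\<in>{h\<in>{1..2^n-1}. i \<in> bits n h}. f h)"
proof -
  assume i: "i \<in> {1..n}"
  have "(\<Prod>h\<in>{1..2^n-1}. f h ^ eps i h) = (\<Prod>h\<in>{1..2^n-1}. if i \<in> bits n h then f h else 1)"
    by (intro prod.cong refl) (simp add: eps_iff[OF i])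
  also have "\<dots> = (\<Prod>h\<in>{h\<in>{1..2^n-1}. i \<in> bits n h}. f h)"
    by (rule prod.inter_filter[symmetric]) simp
  finally show ?thesis .
qed

lemma s1_iff: "h \<in> {1..2^n-1} \<Longrightarrow> (s n h = 1 \<longleftrightarrow> (\<exists>j\<in>{1..n}. h = 2^(j-1)))"
proof
  assume h: "h \<in> {1..2^n-1}" and "s n h = 1"
  then have "card (bits n h) = 1" by (simp add: s_card)
  then obtain j where j: "bits n h = {j}" by (rule card_1_singletonE)
  then have jn: "j \<in> {1..n}" using bits_sub by blast
  have "bits n h = bits n (2^(j-1))" using j bits_pow[OF jn] by simp
  then have "h = 2^(j-1)" by (rule bits_inj[OF H_lt[OF h] H_lt[OF pow_in_H[OF jn]]])
  then show "\<exists>j\<in>{1..n}. h = 2^(j-1)" using jn by blast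
next
  assume "\<exists>j\<in>{1..n}. h = 2^(j-1)"
  then obtain j where j: "j \<in> {1..n}" "h = 2^(j-1)" by blast
  then have "bits n h = {j}" using bits_pow by blast
  then show "s n h = 1" by (simp add: s_card)
qed

definition chainf :: "'h set \<Rightarrow> ('h \<Rightarrow> 'i set) \<Rightarrow> ('h \<Rightarrow> nat) \<Rightarrow> bool" where
  "chainf X b u \<longleftrightarrow> (\<forall>h\<in>X. \<forall>l\<in>X. 0 < u h \<longrightarrow> 0 < u l \<longrightarrow> b h \<subseteq> b l \<or> b l \<subseteq> b h)"

definition repf :: "'h set \<Rightarrow> ('h \<Rightarrow> 'i set) \<Rightarrow> 'i set \<Rightarrow> ('h \<Rightarrow> nat) \<Rightarrow> ('i \<Rightarrow> nat) \<Rightarrow> bool" where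
  "repf X b I u a \<longleftrightarrow> (\<forall>i\<in>I. a i = (\<Sum>h\<in>{h\<in>X. i \<in> b h}. u h))"

definition good :: "'h set \<Rightarrow> ('h \<Rightarrow> 'i set) \<Rightarrow> 'i set \<Rightarrow> bool" where
  "good X b I \<longleftrightarrow> finite X \<and> finite I \<and> (\<forall>h\<in>X. b h \<subseteq> I \<and> b h \<noteq> {}) \<and> inj_on b X"

lemma chain_top:
  assumes "finite C" "C \<noteq> {}" "\<forall>h\<in>C. \<forall>l\<in>C. b h \<subseteq> b l \<or> b l \<subseteq> b h"
  shows "\<exists>t\<in>C. \<forall>l\<in>C. b l \<subseteq> b t"
  using assms
proof (induction C rule: finite_ne_induct)
  case (singleton x)
  then show ?case by simp
next
  case (insert x F)
  then obtain t where t: "t \<in> F" "\<forall>l\<in>F. b l \<subseteq> b t" by auto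
  have "b x \<subseteq> b t \<or> b t \<subseteq> b x" using insert.prems t(1) by blast
  then show ?case
  proof
    assume "b x \<subseteq> b t" then show ?thesis using t by blast
  next
    assume "b t \<subseteq> b x" then show ?thesis using t by blast
  qed
qed

lemma rep_ge:
  assumes "good X b I" "repf X b I u a" "h \<in> X" "i \<in> b h"
  shows "u h \<le> a i"
proof -
  have fin: "finite X" and sub: "b h \<subseteq> I" using assms(1,3) unfolding good_def by auto
  have iI: "i \<in> I" using sub assms(4) by blast
  have hin: "h \<in> {h\<in>X. i \<in> b h}" using assms(3,4) by blast
  have "a i = (\<Sum>h\<in>{h\<in>X. i \<in> b h}. u h)" using assms(2) iI unfolding repf_def by blast
  also have "\<dots> = u h + (\<Sum>h\<in>{h\<in>X. i \<in> b h} - {h}. u h)"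
    using fin hin by (intro sum.remove) auto
  finally show ?thesis by linarith
qed

lemma rep_zero:
  assumes "good X b I" "repf X b I u a" "\<forall>i\<in>I. a i = 0" "h \<in> X"
  shows "u h = 0"
proof -
  have "b h \<noteq> {}" "b h \<subseteq> I" using assms(1,4) unfolding good_def by auto
  then obtain i where i: "i \<in> b h" "i \<in> I" by blast
  then have "u h \<le> a i" using rep_ge[OF assms(1,2,4)] by blast
  then show ?thesis using assms(3) i(2) by simp
qed

lemma rep_pos:
  assumes "good X b I" "repf X b I u a" "i \<in> I" "0 < a i"
  shows "\<exists>h\<in>X. i \<in> b h \<and> 0 < u h"
proof (rule ccontr)
  assume "\<not> ?thesis"
  then have "(\<Sum>h\<in>{h\<in>X. i \<in> b h}. u h) = 0" by (intro sum.neutral) auto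
  then show False using assms(2,3,4) unfolding repf_def by auto
qed

lemma top_lemma:
  assumes g: "good X b I" and ch: "chainf X b u" and r: "repf X b I u a" and ex: "\<exists>i\<in>I. 0 < a i"
  shows "\<exists>t\<in>X. b t = {i\<in>I. 0 < a i} \<and> 0 < u t \<and> (\<forall>i\<in>b t. u t \<le> a i) \<and> (\<exists>i\<in>b t. a i = u t)
           \<and> (\<forall>h\<in>X. h \<noteq> t \<longrightarrow> 0 < u h \<longrightarrow> b h \<subset> b t)"
proof -
  have fin: "finite X" and bsub: "\<forall>h\<in>X. b h \<subseteq> I \<and> b h \<noteq> {}" and inj: "inj_on b X"
    using g unfolding good_def by auto
  define C where "C = {h\<in>X. 0 < u h}"
  obtain i0 where i0: "i0 \<in> I" "0 < a i0" using ex by blast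
  obtain h0 where h0: "h0 \<in> X" "i0 \<in> b h0" "0 < u h0" using rep_pos[OF g r i0] by blast
  have Cne: "C \<noteq> {}" using h0 unfolding C_def by blast
  have Cfin: "finite C" using fin unfolding C_def by simp
  have Cch: "\<forall>h\<in>C. \<forall>l\<in>C. b h \<subseteq> b l \<or> b l \<subseteq> b h" using ch unfolding chainf_def C_def by blast
  obtain t where t: "t \<in> C" "\<forall>l\<in>C. b l \<subseteq> b t" using chain_top[OF Cfin Cne Cch] by blast
  have tX: "t \<in> X" and ut: "0 < u t" using t(1) unfolding C_def by auto
  have bt: "b t = {i\<in>I. 0 < a i}"
  proof
    show "b t \<subseteq> {i\<in>I. 0 < a i}"
    proof
      fix i assume i: "i \<in> b t"
      then have "u t \<le> a i" using rep_ge[OF g r tX] by blast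
      moreover have "i \<in> I" using bsub tX i by blast
      ultimately show "i \<in> {i\<in>I. 0 < a i}" using ut by simp
    qed
  next
    show "{i\<in>I. 0 < a i} \<subseteq> b t"
    proof
      fix i assume i: "i \<in> {i\<in>I. 0 < a i}"
      then obtain h where h: "h \<in> X" "i \<in> b h" "0 < u h" using rep_pos[OF g r] by blast
      then have "h \<in> C" unfolding C_def by blast
      then show "i \<in> b t" using t(2) h(2) by blast
    qed
  qed
  have below: "\<forall>h\<in>X. h \<noteq> t \<longrightarrow> 0 < u h \<longrightarrow> b h \<subset> b t"
  proof (intro ballI impI)
    fix h assume h: "h \<in> X" "h \<noteq> t" "0 < u h"
    then have "b h \<subseteq> b t" using t(2) unfolding C_def by blast
    moreover have "b h \<noteq> b t" using inj h(1,2) tX unfolding inj_on_def by blast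
    ultimately show "b h \<subset> b t" by blast
  qed
  have att: "\<exists>i\<in>b t. a i = u t"
  proof (cases "C - {t} = {}")
    case True
    obtain i where i: "i \<in> b t" using bsub tX by blast
    have iI: "i \<in> I" using bsub tX i by blast
    have "a i = (\<Sum>h\<in>{h\<in>X. i \<in> b h}. u h)" using r iI unfolding repf_def by blast
    also have "\<dots> = u t + (\<Sum>h\<in>{h\<in>X. i \<in> b h} - {t}. u h)"
      using fin tX i by (intro sum.remove) auto
    also have "(\<Sum>h\<in>{h\<in>X. i \<in> b h} - {t}. u h) = 0"
      using True unfolding C_def by (intro sum.neutral) auto
    finally show ?thesis using i by auto
  next
    case False
    have C'fin: "finite (C - {t})" using Cfin by simp
    have C'ch: "\<forall>h\<in>C - {t}. \<forall>l\<in>C - {t}. b h \<subseteq> b l \<or> b l \<subseteq> b h" using Cch by blast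
    obtain t' where t': "t' \<in> C - {t}" "\<forall>l\<in>C - {t}. b l \<subseteq> b t'"
      using chain_top[OF C'fin False C'ch] by blast
    have "b t' \<subset> b t" using below t'(1) unfolding C_def by blast
    then obtain i where i: "i \<in> b t" "i \<notin> b t'" by blast
    have iI: "i \<in> I" using bsub tX i by blast
    have "a i = (\<Sum>h\<in>{h\<in>X. i \<in> b h}. u h)" using r iI unfolding repf_def by blast
    also have "\<dots> = u t + (\<Sum>h\<in>{h\<in>X. i \<in> b h} - {t}. u h)"
      using fin tX i by (intro sum.remove) auto
    also have "(\<Sum>h\<in>{h\<in>X. i \<in> b h} - {t}. u h) = 0"
    proof (intro sum.neutral ballI)
      fix h assume h: "h \<in> {h\<in>X. i \<in> b h} - {t}"
      show "u h = 0"
      proof (rule ccontr)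
        assume "u h \<noteq> 0"
        then have "h \<in> C - {t}" using h unfolding C_def by auto
        then have "b h \<subseteq> b t'" using t'(2) by blast
        then show False using h i(2) by blast
      qed
    qed
    finally show ?thesis using i by auto
  qed
  have "\<forall>i\<in>b t. u t \<le> a i" using rep_ge[OF g r tX] by blast
  then show ?thesis using tX bt ut att below by blast
qed

lemma sum_upd_in:
  assumes "finite A" "t \<in> A"
  shows "(\<Sum>h\<in>A. (u(t := x)) h) = x + (\<Sum>h\<in>A - {t}. u h)"
proof -
  have "(\<Sum>h\<in>A. (u(t := x)) h) = (u(t := x)) t + (\<Sum>h\<in>A - {t}. (u(t := x)) h)"
    using assms by (intro sum.remove) auto
  also have "(\<Sum>h\<in>A - {t}. (u(t := x)) h) = (\<Sum>h\<in>A - {t}. u h)"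
    by (intro sum.cong) auto
  finally show ?thesis by simp
qed

lemma sum_upd_notin:
  assumes "t \<notin> A"
  shows "(\<Sum>h\<in>A. (u(t := x)) h) = (\<Sum>h\<in>A. u h)"
  using assms by (intro sum.cong) auto

lemma uniq_aux:
  assumes g: "good X b I"
  shows "\<forall>a u v. (\<Sum>i\<in>I. a i) = m \<longrightarrow> chainf X b u \<longrightarrow> chainf X b v \<longrightarrow> repf X b I u a \<longrightarrow> repf X b I v a
           \<longrightarrow> (\<forall>h\<in>X. u h = v h)"
proof (induction m rule: less_induct)
  case (less m)
  have fin: "finite X" and finI: "finite I" and bsub: "\<forall>h\<in>X. b h \<subseteq> I \<and> b h \<noteq> {}" and inj: "inj_on b X"
    using g unfolding good_def by auto
  show ?case
  proof (intro allI impI)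
    fix a u v
    assume m: "(\<Sum>i\<in>I. a i) = m" and cu: "chainf X b u" and cv: "chainf X b v"
      and ru: "repf X b I u a" and rv: "repf X b I v a"
    show "\<forall>h\<in>X. u h = v h"
    proof (cases "\<forall>i\<in>I. a i = 0")
      case True
      then show ?thesis using rep_zero[OF g ru True] rep_zero[OF g rv True] by simp
    next
      case False
      then have ex: "\<exists>i\<in>I. 0 < a i" by auto
      obtain t where t: "t\<in>X" "b t = {i\<in>I. 0 < a i}" "0 < u t" "\<forall>i\<in>b t. u t \<le> a i"
          "\<exists>i\<in>b t. a i = u t" "\<forall>h\<in>X. h \<noteq> t \<longrightarrow> 0 < u h \<longrightarrow> b h \<subset> b t"
        using top_lemma[OF g cu ru ex] by blast
      obtain t' where t': "t'\<in>X" "b t' = {i\<in>I. 0 < a i}" "0 < v t'" "\<forall>i\<in>b t'. v t' \<le> a i"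
          "\<exists>i\<in>b t'. a i = v t'"
        using top_lemma[OF g cv rv ex] by blast
      have tt: "t' = t" using inj t(1,2) t'(1,2) unfolding inj_on_def by blast
      have uv: "u t = v t"
      proof -
        obtain i where i: "i \<in> b t" "a i = u t" using t(5) by blast
        have "v t' \<le> a i" using t'(4) tt i(1) by blast
        then have 1: "v t \<le> u t" using tt i(2) by simp
        obtain j where j: "j \<in> b t'" "a j = v t'" using t'(5) by blast
        have "u t \<le> a j" using t(4) tt j(1) by blast
        then have "u t \<le> v t" using tt j(2) by simp
        with 1 show ?thesis by simp
      qed
      define c where "c = u t"
      define a' where "a' = (\<lambda>i. if i \<in> b t then a i - c else a i)"
      define u' where "u' = u(t := 0)"
      define v' where "v' = v(t := 0)"
      have rep': "repf X b I w' a'" if w: "repf X b I w a" "w t = c" and w'def: "w' = w(t := 0)" for w w'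
        unfolding repf_def
      proof
        fix i assume iI: "i \<in> I"
        have fA: "finite {h\<in>X. i \<in> b h}" using fin by simp
        have ai: "a i = (\<Sum>h\<in>{h\<in>X. i \<in> b h}. w h)" using w(1) iI unfolding repf_def by blast
        show "a' i = (\<Sum>h\<in>{h\<in>X. i \<in> b h}. w' h)"
        proof (cases "i \<in> b t")
          case True
          then have tin: "t \<in> {h\<in>X. i \<in> b h}" using t(1) by blast
          have "(\<Sum>h\<in>{h\<in>X. i \<in> b h}. w h) = w t + (\<Sum>h\<in>{h\<in>X. i \<in> b h} - {t}. w h)"
            using fA tin by (intro sum.remove) auto
          moreover have "(\<Sum>h\<in>{h\<in>X. i \<in> b h}. w' h) = 0 + (\<Sum>h\<in>{h\<in>X. i \<in> b h} - {t}. w h)"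
            unfolding w'def by (rule sum_upd_in[OF fA tin])
          ultimately show ?thesis using ai True w(2) unfolding a'_def by simp
        next
          case False
          then have tin: "t \<notin> {h\<in>X. i \<in> b h}" by blast
          have "(\<Sum>h\<in>{h\<in>X. i \<in> b h}. w' h) = (\<Sum>h\<in>{h\<in>X. i \<in> b h}. w h)"
            unfolding w'def by (rule sum_upd_notin[OF tin])
          then show ?thesis using ai False unfolding a'_def by simp
        qed
      qed
      have ru': "repf X b I u' a'" using rep'[OF ru] c_def u'_def by simp
      have rv': "repf X b I v' a'" using rep'[OF rv] c_def uv v'_def by simp
      have cu': "chainf X b u'" using cu unfolding chainf_def u'_def by auto
      have cv': "chainf X b v'" using cv unfolding chainf_def v'_def by auto
      have less_m: "(\<Sum>i\<in>I. a' i) < m"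
      proof -
        obtain i where i: "i \<in> b t" "a i = u t" using t(5) by blast
        have iI: "i \<in> I" using i(1) t(2) by blast
        have "\<forall>j\<in>I. a' j \<le> a j" unfolding a'_def by auto
        moreover have "a' i < a i" using i t(3) unfolding a'_def c_def by simp
        ultimately have "(\<Sum>i\<in>I. a' i) < (\<Sum>i\<in>I. a i)"
          using finI iI by (intro sum_strict_mono_ex1) auto
        then show ?thesis using m by simp
      qed
      have "\<forall>h\<in>X. u' h = v' h" using less.IH[OF less_m] cu' cv' ru' rv' by blast
      show ?thesis
      proof
        fix h assume h: "h \<in> X"
        show "u h = v h"
        proof (cases "h = t")
          case True then show ?thesis using uv by simp
        next
          case False
          have "u' h = v' h" using \<open>\<forall>h\<in>X. u' h = v' h\<close> h by blast
          then show ?thesis using False unfolding u'_def v'_def by simp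
        qed
      qed
    qed
  qed
qed

lemma uniq:
  assumes "good X b I" "chainf X b u" "chainf X b v" "repf X b I u a" "repf X b I v a" "h \<in> X"
  shows "u h = v h"
  using uniq_aux[OF assms(1)] assms(2-6) by blast

lemma exist_aux:
  assumes g: "good X b I" and surj: "\<forall>S. S \<subseteq> I \<longrightarrow> S \<noteq> {} \<longrightarrow> (\<exists>h\<in>X. b h = S)"
  shows "\<forall>a. (\<Sum>i\<in>I. a i) = m \<longrightarrow> (\<exists>u. chainf X b u \<and> repf X b I u a \<and>
            (\<forall>h\<in>X. 0 < u h \<longrightarrow> b h \<subseteq> {i\<in>I. 0 < a i}))"
proof (induction m rule: less_induct)
  case (less m)
  have fin: "finite X" and finI: "finite I" and bsub: "\<forall>h\<in>X. b h \<subseteq> I \<and> b h \<noteq> {}" and inj: "inj_on b X"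
    using g unfolding good_def by auto
  show ?case
  proof (intro allI impI)
    fix a assume m: "(\<Sum>i\<in>I. a i) = m"
    show "\<exists>u. chainf X b u \<and> repf X b I u a \<and> (\<forall>h\<in>X. 0 < u h \<longrightarrow> b h \<subseteq> {i\<in>I. 0 < a i})"
    proof (cases "\<forall>i\<in>I. a i = 0")
      case True
      have "chainf X b (\<lambda>_. 0)" unfolding chainf_def by simp
      moreover have "repf X b I (\<lambda>_. 0) a" unfolding repf_def using True by simp
      ultimately show ?thesis by auto
    next
      case False
      define T where "T = {i\<in>I. 0 < a i}"
      have Tne: "T \<noteq> {}" using False unfolding T_def by auto
      have Tfin: "finite T" using finI unfolding T_def by simp
      have TI: "T \<subseteq> I" unfolding T_def by blast
      have "\<exists>h\<in>X. b h = T" using surj TI Tne by blast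
      then obtain t where t: "t \<in> X" "b t = T" by blast
      define c where "c = Min (a ` T)"
      have cle: "\<forall>i\<in>T. c \<le> a i" unfolding c_def using Tfin by simp
      have cin: "c \<in> a ` T" unfolding c_def using Tfin Tne by simp
      then obtain i0 where i0: "i0 \<in> T" "a i0 = c" by blast
      have cpos: "0 < c" using i0 unfolding T_def by auto
      define a' where "a' = (\<lambda>i. if i \<in> T then a i - c else a i)"
      have less_m: "(\<Sum>i\<in>I. a' i) < m"
      proof -
        have iI: "i0 \<in> I" using i0(1) unfolding T_def by blast
        have "\<forall>j\<in>I. a' j \<le> a j" unfolding a'_def by auto
        moreover have "a' i0 < a i0" using i0 cpos unfolding a'_def by simp
        ultimately have "(\<Sum>i\<in>I. a' i) < (\<Sum>i\<in>I. a i)"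
          using finI iI by (intro sum_strict_mono_ex1) auto
        then show ?thesis using m by simp
      qed
      obtain u' where u': "chainf X b u'" "repf X b I u' a'" "\<forall>h\<in>X. 0 < u' h \<longrightarrow> b h \<subseteq> {i\<in>I. 0 < a' i}"
        using less.IH[OF less_m] by blast
      have sT: "{i\<in>I. 0 < a' i} \<subseteq> T" unfolding a'_def T_def by auto
      have sub': "\<forall>h\<in>X. 0 < u' h \<longrightarrow> b h \<subseteq> T"
        using u'(3) sT by blast
      have u't: "u' t = 0"
      proof (rule ccontr)
        assume "u' t \<noteq> 0"
        then have "b t \<subseteq> {i\<in>I. 0 < a' i}" using u'(3) t(1) by blast
        then have "0 < a' i0" using i0(1) t(2) by blast
        then show False using i0 unfolding a'_def by simp
      qed
      define u where "u = u'(t := c)"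
      have ch: "chainf X b u" unfolding chainf_def
      proof (intro ballI impI)
        fix h l assume hl: "h \<in> X" "l \<in> X" "0 < u h" "0 < u l"
        show "b h \<subseteq> b l \<or> b l \<subseteq> b h"
        proof (cases "h = t")
          case True
          show ?thesis
          proof (cases "l = t")
            case True then show ?thesis using \<open>h = t\<close> by simp
          next
            case False
            then have "0 < u' l" using hl(4) unfolding u_def by simp
            then have "b l \<subseteq> T" using sub' hl(2) by blast
            then show ?thesis using True t(2) by blast
          qed
        next
          case False
          show ?thesis
          proof (cases "l = t")
            case True
            have "0 < u' h" using hl(3) False unfolding u_def by simp
            then have "b h \<subseteq> T" using sub' hl(1) by blast
            then show ?thesis using True t(2) by blast
          next
            case False2: False
            have "0 < u' h" "0 < u' l" using hl(3,4) False False2 unfolding u_def by auto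
            then show ?thesis using u'(1) hl(1,2) unfolding chainf_def by blast
          qed
        qed
      qed
      have rp: "repf X b I u a" unfolding repf_def
      proof
        fix i assume iI: "i \<in> I"
        have fA: "finite {h\<in>X. i \<in> b h}" using fin by simp
        have ai: "a' i = (\<Sum>h\<in>{h\<in>X. i \<in> b h}. u' h)" using u'(2) iI unfolding repf_def by blast
        show "a i = (\<Sum>h\<in>{h\<in>X. i \<in> b h}. u h)"
        proof (cases "i \<in> T")
          case True
          then have tin: "t \<in> {h\<in>X. i \<in> b h}" using t by blast
          have "(\<Sum>h\<in>{h\<in>X. i \<in> b h}. u' h) = u' t + (\<Sum>h\<in>{h\<in>X. i \<in> b h} - {t}. u' h)"
            using fA tin by (intro sum.remove) auto
          moreover have "(\<Sum>h\<in>{h\<in>X. i \<in> b h}. u h) = c + (\<Sum>h\<in>{h\<in>X. i \<in> b h} - {t}. u' h)"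
            unfolding u_def by (rule sum_upd_in[OF fA tin])
          moreover have "a i = a' i + c" using True cle unfolding a'_def by simp
          ultimately show ?thesis using ai u't by simp
        next
          case False
          then have tin: "t \<notin> {h\<in>X. i \<in> b h}" using t by blast
          have "(\<Sum>h\<in>{h\<in>X. i \<in> b h}. u h) = (\<Sum>h\<in>{h\<in>X. i \<in> b h}. u' h)"
            unfolding u_def by (rule sum_upd_notin[OF tin])
          then show ?thesis using ai False unfolding a'_def by simp
        qed
      qed
      have "\<forall>h\<in>X. 0 < u h \<longrightarrow> b h \<subseteq> {i\<in>I. 0 < a i}"
      proof (intro ballI impI)
        fix h assume h: "h \<in> X" "0 < u h"
        show "b h \<subseteq> {i\<in>I. 0 < a i}"
        proof (cases "h = t")
          case True then show ?thesis using t(2) unfolding T_def by simp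
        next
          case False
          then have "0 < u' h" using h(2) unfolding u_def by simp
          then show ?thesis using sub' h(1) unfolding T_def by blast
        qed
      qed
      then show ?thesis using ch rp by blast
    qed
  qed
qed

lemma exist:
  assumes "good X b I" "\<forall>S. S \<subseteq> I \<longrightarrow> S \<noteq> {} \<longrightarrow> (\<exists>h\<in>X. b h = S)"
  shows "\<exists>u. chainf X b u \<and> repf X b I u a"
  using exist_aux[OF assms] by blast

lemma dom_lemma:
  assumes g: "good X b I" and ch: "chainf X b u" and r: "repf X b I u a"
    and t: "t \<in> X" "b t = {i}" "0 < u t" and j: "j \<in> I" "j \<noteq> i"
  shows "a j + u t \<le> a i"
proof -
  have fin: "finite X" and bsub: "\<forall>h\<in>X. b h \<subseteq> I \<and> b h \<noteq> {}" using g unfolding good_def by auto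
  have iI: "i \<in> I" using bsub t by blast
  have fJ: "finite {h\<in>X. j \<in> b h}" and fI: "finite {h\<in>X. i \<in> b h}" using fin by auto
  have "a j = (\<Sum>h\<in>{h\<in>X. j \<in> b h}. u h)" using r j(1) unfolding repf_def by blast
  also have "\<dots> = (\<Sum>h\<in>{h\<in>X. j \<in> b h \<and> 0 < u h}. u h)"
    using fJ by (intro sum.mono_neutral_right) auto
  also have "\<dots> \<le> (\<Sum>h\<in>{h\<in>X. i \<in> b h} - {t}. u h)"
  proof (intro sum_mono2)
    show "finite ({h\<in>X. i \<in> b h} - {t})" using fI by simp
    show "{h\<in>X. j \<in> b h \<and> 0 < u h} \<subseteq> {h\<in>X. i \<in> b h} - {t}"
    proof
      fix h assume h: "h \<in> {h\<in>X. j \<in> b h \<and> 0 < u h}"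
      then have "b h \<subseteq> b t \<or> b t \<subseteq> b h" using ch t unfolding chainf_def by blast
      moreover have "\<not> b h \<subseteq> b t" using h t(2) j(2) by blast
      ultimately have "i \<in> b h" using t(2) by blast
      moreover have "h \<noteq> t" using h t(2) j(2) by blast
      ultimately show "h \<in> {h\<in>X. i \<in> b h} - {t}" using h by blast
    qed
  qed auto
  finally have "a j \<le> (\<Sum>h\<in>{h\<in>X. i \<in> b h} - {t}. u h)" .
  moreover have "a i = u t + (\<Sum>h\<in>{h\<in>X. i \<in> b h} - {t}. u h)"
  proof -
    have "a i = (\<Sum>h\<in>{h\<in>X. i \<in> b h}. u h)" using r iI unfolding repf_def by blast
    also have "\<dots> = u t + (\<Sum>h\<in>{h\<in>X. i \<in> b h} - {t}. u h)"
      using fI t by (intro sum.remove) auto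
    finally show ?thesis .
  qed
  ultimately show ?thesis by linarith
qed

definition Yf :: "nat \<Rightarrow> (nat \<Rightarrow> int) \<Rightarrow> nat \<Rightarrow> int" where
  "Yf n z i = (\<Prod>h\<in>{h\<in>{1..2^n-1}. i \<in> bits n h}. z h)"

definition Ef :: "nat \<Rightarrow> nat \<Rightarrow> nat" where
  "Ef n h = (if s n h = 1 then 1 else s n h - 1)"

lemma s_ge1: "h \<in> {1..2^n-1} \<Longrightarrow> s n h \<ge> 1"
proof -
  assume h: "h \<in> {1..2^n-1}"
  have "bits n h \<noteq> {}" using bits_ne[OF h] .
  then have "card (bits n h) \<noteq> 0" using finite_bits[of n h] by simp
  then show ?thesis by (simp add: s_card)
qed

lemma eps_le_s: "i \<in> {1..n} \<Longrightarrow> eps i h \<le> s n h"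
  unfolding s_def by (rule member_le_sum) auto

lemma s_N: "s n (2^n - 1) = n"
  unfolding s_card bits_N by simp

lemma exp_eq:
  assumes n: "n \<ge> 2" and i: "i \<in> {1..n}" and h: "h \<in> {1..2^n-1}"
  shows "(if h = 2^(i-1) then 1 else 0) + (\<Sum>j\<in>{1..n}-{i}. eps j h)
       = Ef n h + (if h \<in> {h\<in>{1..2^n-1}. h \<noteq> 2^n-1 \<and> s n h \<ge> 2} then 1 - eps i h else 0)"
proof -
  have sd: "(\<Sum>j\<in>{1..n}-{i}. eps j h) = s n h - eps i h"
    unfolding s_def using i by (simp add: sum_diff1_nat)
  have le: "eps i h \<le> s n h" by (rule eps_le_s[OF i])
  have e1: "eps i h \<le> 1" by (rule eps_le1)
  have s1: "s n h \<ge> 1" by (rule s_ge1[OF h])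
  have pow: "h = 2^(i-1) \<Longrightarrow> s n h = 1 \<and> eps i h = 1"
  proof -
    assume hp: "h = 2^(i-1)"
    have "bits n h = {i}" using hp bits_pow[OF i] by simp
    then show ?thesis by (simp add: s_card eps_iff[OF i])
  qed
  have pow2: "s n h = 1 \<Longrightarrow> eps i h = 1 \<Longrightarrow> h = 2^(i-1)"
  proof -
    assume a: "s n h = 1" "eps i h = 1"
    then obtain j where j: "j \<in> {1..n}" "h = 2^(j-1)" using s1_iff[OF h] by blast
    have ij: "1 \<le> i" "1 \<le> j" using i j(1) by auto
    have "eps i (2^(j-1)) = (if i = j then 1 else 0)" by (rule eps_pow2[OF ij])
    then have e: "eps i h = (if i = j then 1 else 0)" using j(2) by (simp only:)
    have "i = j"
    proof (rule ccontr)
      assume "i \<noteq> j"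
      with e have "eps i h = 0" by simp
      with a(2) show False by simp
    qed
    then show ?thesis using j(2) by simp
  qed
  have Nc: "h = 2^n - 1 \<Longrightarrow> eps i h = 1 \<and> s n h = n"
    using eps_all_ones[OF i] s_N by simp
  show ?thesis
  proof (cases "s n h = 1")
    case True
    then have hn: "(if h \<in> {h\<in>{1..2^n-1}. h \<noteq> 2^n-1 \<and> s n h \<ge> 2} then 1 - eps i h else 0) = 0" by auto
    have E1: "Ef n h = 1" using True by (simp add: Ef_def)
    have X: "(if h = 2^(i-1) then 1 else 0) + (s n h - eps i h) = (1::nat)"
    proof (cases "eps i h = 1")
      case True2: True
      then show ?thesis using pow2[OF True True2] True by simp
    next
      case False2: False
      then have "h \<noteq> 2^(i-1)" using pow by blast
      moreover have "eps i h = 0" using False2 eps_01[of i h] by simp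
      ultimately show ?thesis using True by simp
    qed
    show ?thesis unfolding sd hn E1 using X by simp
  next
    case False
    then have s2: "s n h \<ge> 2" using s1 by simp
    have hne: "h \<noteq> 2^(i-1)" using pow False by blast
    have Ef: "Ef n h = s n h - 1" using False by (simp add: Ef_def)
    show ?thesis
    proof (cases "h = 2^n - 1")
      case True
      then have "eps i h = 1" using Nc by simp
      then show ?thesis using sd hne Ef True by simp
    next
      case False2: False
      then have "h \<in> {h\<in>{1..2^n-1}. h \<noteq> 2^n-1 \<and> s n h \<ge> 2}" using h s2 by simp
      then show ?thesis using sd hne Ef s2 le e1 by simp
    qed
  qed
qed

lemma prod_exp_H:
  fixes z :: "nat \<Rightarrow> int"
  assumes n: "n \<ge> 2" and i: "i \<in> {1..n}"
  shows "z (2^(i-1)) * (\<Prod>j\<in>{1..n}-{i}. Yf n z j)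
       = (\<Prod>h\<in>{1..2^n-1}. z h ^ Ef n h) * (\<Prod>h\<in>{h\<in>{1..2^n-1}. h \<noteq> 2^n-1 \<and> s n h \<ge> 2}. z h ^ (1 - eps i h))"
proof -
  let ?H = "{1..(2::nat)^n-1}"
  let ?Hp = "{h\<in>{1..(2::nat)^n-1}. h \<noteq> 2^n-1 \<and> s n h \<ge> 2}"
  have hi: "(2::nat)^(i-1) \<in> ?H" by (rule pow_in_H[OF i])
  have A: "z (2^(i-1)) = (\<Prod>h\<in>?H. z h ^ (if h = 2^(i-1) then 1 else 0))"
  proof -
    have "(\<Prod>h\<in>?H. z h ^ (if h = 2^(i-1) then 1 else 0)) = (\<Prod>h\<in>?H. if h = 2^(i-1) then z h else 1)"
      by (intro prod.cong) auto
    also have "\<dots> = z (2^(i-1))" using hi by simp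
    finally show ?thesis by simp
  qed
  have Y: "Yf n z j = (\<Prod>h\<in>?H. z h ^ eps j h)" if j: "j \<in> {1..n}" for j
    unfolding Yf_def using prod_eps[OF j, of z] by simp
  have B: "(\<Prod>j\<in>{1..n}-{i}. Yf n z j) = (\<Prod>h\<in>?H. z h ^ (\<Sum>j\<in>{1..n}-{i}. eps j h))"
  proof -
    have "(\<Prod>j\<in>{1..n}-{i}. Yf n z j) = (\<Prod>j\<in>{1..n}-{i}. \<Prod>h\<in>?H. z h ^ eps j h)"
      using Y by (intro prod.cong) auto
    also have "\<dots> = (\<Prod>h\<in>?H. \<Prod>j\<in>{1..n}-{i}. z h ^ eps j h)"
      by (rule prod.swap)
    also have "\<dots> = (\<Prod>h\<in>?H. z h ^ (\<Sum>j\<in>{1..n}-{i}. eps j h))"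
      by (intro prod.cong refl) (simp add: power_sum)
    finally show ?thesis .
  qed
  have C: "(\<Prod>h\<in>?Hp. z h ^ (1 - eps i h)) = (\<Prod>h\<in>?H. z h ^ (if h \<in> ?Hp then 1 - eps i h else 0))"
  proof -
    have "(\<Prod>h\<in>?H. z h ^ (if h \<in> ?Hp then 1 - eps i h else 0))
        = (\<Prod>h\<in>?H. if h \<noteq> 2^n-1 \<and> s n h \<ge> 2 then z h ^ (1 - eps i h) else 1)"
      by (intro prod.cong) auto
    also have "\<dots> = (\<Prod>h\<in>?Hp. z h ^ (1 - eps i h))"
      by (rule prod.inter_filter[symmetric]) simp
    finally show ?thesis by simp
  qed
  have "z (2^(i-1)) * (\<Prod>j\<in>{1..n}-{i}. Yf n z j)
      = (\<Prod>h\<in>?H. z h ^ ((if h = 2^(i-1) then 1 else 0) + (\<Sum>j\<in>{1..n}-{i}. eps j h)))"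
    unfolding A B by (simp add: power_add prod.distrib)
  also have "\<dots> = (\<Prod>h\<in>?H. z h ^ (Ef n h + (if h \<in> ?Hp then 1 - eps i h else 0)))"
    using exp_eq[OF n i] by (intro prod.cong refl) presburger
  also have "\<dots> = (\<Prod>h\<in>?H. z h ^ Ef n h) * (\<Prod>h\<in>?Hp. z h ^ (1 - eps i h))"
    unfolding C by (simp add: power_add prod.distrib)
  finally show ?thesis .
qed

lemma sum_ident:
  fixes z x' :: "nat \<Rightarrow> int"
  assumes n: "n \<ge> 2"
  shows "(\<Sum>i\<in>{1..n}. (z (2^(i-1)) * x' i) * (\<Prod>j\<in>{1..n}-{i}. Yf n z j))
       = (\<Prod>h\<in>{1..2^n-1}. z h ^ Ef n h) *
         (\<Sum>i\<in>{1..n}. x' i * (\<Prod>h\<in>{h\<in>{1..2^n-1}. h \<noteq> 2^n-1 \<and> s n h \<ge> 2}. z h ^ (1 - eps i h)))"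
proof -
  have "(\<Sum>i\<in>{1..n}. (z (2^(i-1)) * x' i) * (\<Prod>j\<in>{1..n}-{i}. Yf n z j))
      = (\<Sum>i\<in>{1..n}. x' i * (z (2^(i-1)) * (\<Prod>j\<in>{1..n}-{i}. Yf n z j)))"
    by (intro sum.cong) (auto simp: ac_simps)
  also have "\<dots> = (\<Sum>i\<in>{1..n}. x' i * ((\<Prod>h\<in>{1..2^n-1}. z h ^ Ef n h) *
         (\<Prod>h\<in>{h\<in>{1..2^n-1}. h \<noteq> 2^n-1 \<and> s n h \<ge> 2}. z h ^ (1 - eps i h))))"
    using prod_exp_H[OF n] by (intro sum.cong) auto
  also have "\<dots> = (\<Prod>h\<in>{1..2^n-1}. z h ^ Ef n h) *
         (\<Sum>i\<in>{1..n}. x' i * (\<Prod>h\<in>{h\<in>{1..2^n-1}. h \<noteq> 2^n-1 \<and> s n h \<ge> 2}. z h ^ (1 - eps i h)))"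
    by (simp add: sum_distrib_left ac_simps)
  finally show ?thesis .
qed

lemma Gcd_eq1_iff: "Gcd (A::int set) = 1 \<longleftrightarrow> (\<forall>d. (\<forall>a\<in>A. d dvd a) \<longrightarrow> is_unit d)"
proof
  assume g: "Gcd A = 1"
  show "\<forall>d. (\<forall>a\<in>A. d dvd a) \<longrightarrow> is_unit d"
  proof (intro allI impI)
    fix d assume "\<forall>a\<in>A. d dvd a"
    then have "d dvd Gcd A" by (intro Gcd_greatest) auto
    then show "is_unit d" using g by simp
  qed
next
  assume "\<forall>d. (\<forall>a\<in>A. d dvd a) \<longrightarrow> is_unit d"
  then have u: "is_unit (Gcd A)" using Gcd_dvd by blast
  have "normalize (Gcd A) = Gcd A" by simp
  moreover have "normalize (Gcd A) = 1" using u by (rule is_unit_normalize)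
  ultimately show "Gcd A = 1" by simp
qed

lemma good_bits: "good {1..2^n-1} (bits n) {1..n}"
proof -
  have "inj_on (bits n) {1..2^n-1}"
    unfolding inj_on_def using bits_inj H_lt by blast
  moreover have "\<forall>h\<in>{1..2^n-1}. bits n h \<subseteq> {1..n} \<and> bits n h \<noteq> {}"
    using bits_sub bits_ne by blast
  ultimately show ?thesis unfolding good_def by simp
qed

lemma surj_bits: "\<forall>S. S \<subseteq> {1..n} \<longrightarrow> S \<noteq> {} \<longrightarrow> (\<exists>h\<in>{1..2^n-1}. bits n h = S)"
  using bits_surj by blast

lemma z_nz: "A0_pre n x' z \<Longrightarrow> h \<in> {1..2^n-1} \<Longrightarrow> z h \<noteq> 0"
proof -
  assume a: "A0_pre n x' z" and h: "h \<in> {1..2^n-1}"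
  have "s n h \<ge> 1" by (rule s_ge1[OF h])
  then have "s n h = 1 \<or> s n h > 1" by auto
  then show ?thesis
  proof
    assume "s n h = 1" then show ?thesis using a h unfolding A0_pre_def by blast
  next
    assume "s n h > 1"
    then have "z h > 0" using a h unfolding A0_pre_def by blast
    then show ?thesis by simp
  qed
qed

lemma Yf_nz: "A0_pre n x' z \<Longrightarrow> Yf n z i \<noteq> 0"
proof -
  assume a: "A0_pre n x' z"
  have "\<forall>h\<in>{h\<in>{1..2^n-1}. i \<in> bits n h}. z h \<noteq> 0" using z_nz[OF a] by blast
  then show ?thesis unfolding Yf_def by (subst prod_zero_iff) auto
qed

lemma N_dvd_Yf:
  assumes n: "n \<ge> 1" and i: "i \<in> {1..n}"
  shows "z (2^n-1) dvd Yf n z i"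
proof -
  have "2^n - 1 \<in> {h\<in>{1..2^n-1}. i \<in> bits n h}" using N_in_H[OF n] bits_N i by auto
  then show ?thesis unfolding Yf_def by (intro dvd_prodI) auto
qed

lemma gcd_equiv:
  assumes n: "n \<ge> 1" and a: "A0_pre n x' z"
  shows "A0_gcd n x' z \<longleftrightarrow> Gcd ((\<lambda>i. z (2^(i-1)) * x' i) ` {1..n} \<union> Yf n z ` {1..n}) = 1"
proof
  assume g: "Gcd ((\<lambda>i. z (2^(i-1)) * x' i) ` {1..n} \<union> Yf n z ` {1..n}) = 1"
  show "A0_gcd n x' z" unfolding A0_gcd_def Gcd_eq1_iff
  proof (intro allI impI)
    fix d assume d: "\<forall>a\<in>{z (2^n-1)} \<union> (\<lambda>i. x' i * z (2^(i-1))) ` {1..n}. d dvd a"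
    have "\<forall>a\<in>(\<lambda>i. z (2^(i-1)) * x' i) ` {1..n} \<union> Yf n z ` {1..n}. d dvd a"
    proof
      fix a assume "a \<in> (\<lambda>i. z (2^(i-1)) * x' i) ` {1..n} \<union> Yf n z ` {1..n}"
      then consider (x) i where "i \<in> {1..n}" "a = z (2^(i-1)) * x' i"
        | (y) i where "i \<in> {1..n}" "a = Yf n z i" by blast
      then show "d dvd a"
      proof cases
        case x
        then have "d dvd x' i * z (2^(i-1))" using d by blast
        then show ?thesis using x by (simp add: mult.commute)
      next
        case y
        have "d dvd z (2^n-1)" using d by blast
        then show ?thesis using y N_dvd_Yf[OF n y(1), of z] dvd_trans by blast
      qed
    qed
    then show "is_unit d" using g unfolding Gcd_eq1_iff by blast
  qed
next
  assume g: "A0_gcd n x' z"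
  show "Gcd ((\<lambda>i. z (2^(i-1)) * x' i) ` {1..n} \<union> Yf n z ` {1..n}) = 1"
    unfolding Gcd_eq1_iff
  proof (intro allI impI)
    fix d assume d: "\<forall>a\<in>(\<lambda>i. z (2^(i-1)) * x' i) ` {1..n} \<union> Yf n z ` {1..n}. d dvd a"
    show "is_unit d"
    proof (rule ccontr)
      assume nu: "\<not> is_unit d"
      have 1: "1 \<in> {1..n}" using n by simp
      have "Yf n z 1 \<in> (\<lambda>i. z (2^(i-1)) * x' i) ` {1..n} \<union> Yf n z ` {1..n}" using 1 by blast
      then have "d dvd Yf n z 1" using d by blast
      then have "d \<noteq> 0" using Yf_nz[OF a, of 1] by auto
      then obtain p where p: "p dvd d" "prime p" using prime_divisor_exists nu by blast
      have px: "p dvd z (2^(i-1)) * x' i" if i: "i \<in> {1..n}" for i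
      proof -
        have "z (2^(i-1)) * x' i \<in> (\<lambda>i. z (2^(i-1)) * x' i) ` {1..n} \<union> Yf n z ` {1..n}"
          using i by blast
        then have "d dvd z (2^(i-1)) * x' i" using d by blast
        then show ?thesis by (rule dvd_trans[OF p(1)])
      qed
      have py: "p dvd Yf n z i" if i: "i \<in> {1..n}" for i
      proof -
        have "Yf n z i \<in> (\<lambda>i. z (2^(i-1)) * x' i) ` {1..n} \<union> Yf n z ` {1..n}"
          using i by blast
        then have "d dvd Yf n z i" using d by blast
        then show ?thesis by (rule dvd_trans[OF p(1)])
      qed
      define C where "C = {h\<in>{1..2^n-1}. p dvd z h}"
      have cov: "\<exists>h\<in>C. i \<in> bits n h" if i: "i \<in> {1..n}" for i
      proof -
        have "p dvd (\<Prod>h\<in>{h\<in>{1..2^n-1}. i \<in> bits n h}. z h)" using py[OF i] unfolding Yf_def .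
        moreover have fin: "finite {h\<in>{1..2^n-1}. i \<in> bits n h}" by simp
        ultimately obtain h where "h \<in> {h\<in>{1..2^n-1}. i \<in> bits n h}" "p dvd z h"
          using prime_dvd_prod_iff[OF fin p(2)] by blast
        then show ?thesis unfolding C_def by blast
      qed
      have Cfin: "finite C" unfolding C_def by simp
      have Cne: "C \<noteq> {}" using cov[OF 1] by blast
      have Cch: "\<forall>h\<in>C. \<forall>l\<in>C. bits n h \<subseteq> bits n l \<or> bits n l \<subseteq> bits n h"
      proof (intro ballI)
        fix h l assume h: "h \<in> C" and l: "l \<in> C"
        show "bits n h \<subseteq> bits n l \<or> bits n l \<subseteq> bits n h"
        proof (rule ccontr)
          assume nc: "\<not> ?thesis"
          have hH: "h \<in> {1..2^n-1}" and lH: "l \<in> {1..2^n-1}" using h l unfolding C_def by auto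
          have "reduced n z" using a unfolding A0_pre_def by blast
          then have "gcd (z h) (z l) = 1" using hH lH nc unfolding reduced_def bprec_iff by blast
          moreover have "p dvd z h" "p dvd z l" using h l unfolding C_def by auto
          then have "p dvd gcd (z h) (z l)" by (rule gcd_greatest)
          ultimately have "p dvd 1" by (simp only:)
          then show False using p(2) not_prime_unit by blast
        qed
      qed
      obtain t where t: "t \<in> C" "\<forall>l\<in>C. bits n l \<subseteq> bits n t" using chain_top[OF Cfin Cne Cch] by blast
      have tH: "t \<in> {1..2^n-1}" using t(1) unfolding C_def by auto
      have "{1..n} \<subseteq> bits n t"
      proof
        fix i assume i: "i \<in> {1..n}"
        then obtain h where "h \<in> C" "i \<in> bits n h" using cov by blast
        then show "i \<in> bits n t" using t(2) by blast
      qed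
      then have "bits n t = bits n (2^n-1)" using bits_sub[of n t] bits_N[of n] by blast
      then have "t = 2^n-1" using bits_inj H_lt[OF tH] H_lt[OF N_in_H[OF n]] by blast
      then have pN: "p dvd z (2^n-1)" using t(1) unfolding C_def by blast
      have "\<forall>a\<in>{z (2^n-1)} \<union> (\<lambda>i. x' i * z (2^(i-1))) ` {1..n}. p dvd a"
        using pN px by (auto simp: mult.commute)
      then have "is_unit p" using g unfolding A0_gcd_def Gcd_eq1_iff by blast
      then show False using p(2) not_prime_unit by blast
    qed
  qed
qed

lemma mult_pos_dvd: "0 < multiplicity p x \<Longrightarrow> p dvd x"
  using not_dvd_imp_multiplicity_0 by (metis less_irrefl)

lemma mult_chain:
  assumes a: "A0_pre n x' z" and p: "prime p"
  shows "chainf {1..2^n-1} (bits n) (\<lambda>h. multiplicity p (z h))"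
  unfolding chainf_def
proof (intro ballI impI)
  fix h l assume hH: "h \<in> {1..2^n-1}" and lH: "l \<in> {1..2^n-1}"
    and mh: "0 < multiplicity p (z h)" and ml: "0 < multiplicity p (z l)"
  show "bits n h \<subseteq> bits n l \<or> bits n l \<subseteq> bits n h"
  proof (rule ccontr)
    assume nc: "\<not> ?thesis"
    have "reduced n z" using a unfolding A0_pre_def by blast
    then have g: "gcd (z h) (z l) = 1" using hH lH nc unfolding reduced_def bprec_iff by blast
    have "p dvd z h" "p dvd z l" using mult_pos_dvd mh ml by auto
    then have "p dvd gcd (z h) (z l)" by (rule gcd_greatest)
    then have "p dvd 1" using g by (simp only:)
    then show False using p not_prime_unit by blast
  qed
qed

lemma mult_rep:
  assumes a: "A0_pre n x' z" and p: "prime p"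
  shows "repf {1..2^n-1} (bits n) {1..n} (\<lambda>h. multiplicity p (z h)) (\<lambda>i. multiplicity p (Yf n z i))"
  unfolding repf_def
proof
  fix i assume i: "i \<in> {1..n}"
  have "0 \<notin> z ` {h\<in>{1..2^n-1}. i \<in> bits n h}" using z_nz[OF a] by auto
  then show "multiplicity p (Yf n z i) = (\<Sum>h\<in>{h\<in>{1..2^n-1}. i \<in> bits n h}. multiplicity p (z h))"
    unfolding Yf_def using p by (intro prime_elem_multiplicity_prod_distrib) auto
qed

lemma others_s2:
  assumes j: "j \<in> {1..n}" and h: "h \<in> {1..2^n-1}" and jh: "j \<in> bits n h" and hne: "h \<noteq> 2^(j-1)"
  shows "s n h \<ge> 2"
proof (rule ccontr)
  assume "\<not> s n h \<ge> 2"
  then have "s n h = 1" using s_ge1[OF h] by simp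
  then obtain k where k: "k \<in> {1..n}" "h = 2^(k-1)" using s1_iff[OF h] by blast
  then have "bits n h = {k}" using bits_pow by blast
  then have "k = j" using jh by simp
  then show False using k hne by simp
qed

lemma sgn_Yf:
  assumes a: "A0_pre n x' z" and j: "j \<in> {1..n}"
  shows "sgn (Yf n z j) = sgn (z (2^(j-1)))"
proof -
  let ?A = "{h\<in>{1..2^n-1}. j \<in> bits n h}"
  have fin: "finite ?A" by simp
  have hj: "2^(j-1) \<in> ?A" using pow_in_H[OF j] bits_pow[OF j] by simp
  have "Yf n z j = z (2^(j-1)) * (\<Prod>h\<in>?A - {2^(j-1)}. z h)"
    unfolding Yf_def using prod.remove[OF fin hj] by simp
  moreover have "(\<Prod>h\<in>?A - {2^(j-1)}. z h) > 0"
  proof (intro prod_pos ballI)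
    fix h assume h: "h \<in> ?A - {2^(j-1)}"
    then have hH: "h \<in> {1..2^n-1}" by blast
    have "s n h \<ge> 2" using others_s2[OF j hH] h by blast
    then show "z h > 0" using a hH unfolding A0_pre_def by auto
  qed
  ultimately show ?thesis by (simp add: sgn_mult)
qed

lemma phi_fst: "fst (phi n (x', z)) = (\<lambda>i. if i \<in> {1..n} then z (2^(i-1)) * x' i else 0)"
  unfolding phi_def by simp

lemma phi_snd: "snd (phi n (x', z)) = (\<lambda>i. if i \<in> {1..n} then Yf n z i else 0)"
proof
  fix i
  show "snd (phi n (x', z)) i = (if i \<in> {1..n} then Yf n z i else 0)"
    unfolding phi_def Yf_def using prod_eps[of i n z] by simp
qed

lemma phi_inj:
  assumes n: "n \<ge> 1" and a: "A0_pre n x' z" and b: "A0_pre n x'' w"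
    and eq: "phi n (x', z) = phi n (x'', w)"
  shows "x' = x'' \<and> z = w"
proof -
  have ef: "fst (phi n (x', z)) = fst (phi n (x'', w))" using eq by simp
  have es: "snd (phi n (x', z)) = snd (phi n (x'', w))" using eq by simp
  have X: "z (2^(i-1)) * x' i = w (2^(i-1)) * x'' i" if i: "i \<in> {1..n}" for i
    using fun_cong[OF ef, of i] i unfolding phi_fst by simp
  have Y: "Yf n z i = Yf n w i" if i: "i \<in> {1..n}" for i
    using fun_cong[OF es, of i] i unfolding phi_snd by simp
  have zw: "z h = w h" for h
  proof (cases "h \<in> {1..2^n-1}")
    case False
    then show ?thesis using a b unfolding A0_pre_def by simp
  next
    case hH: True
    have mult: "multiplicity p (z h) = multiplicity p (w h)" if p: "prime p" for p
    proof -
      have ra: "repf {1..2^n-1} (bits n) {1..n} (\<lambda>h. multiplicity p (w h)) (\<lambda>i. multiplicity p (Yf n z i))"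
        using mult_rep[OF b p] Y unfolding repf_def by simp
      show ?thesis
        by (rule uniq[OF good_bits mult_chain[OF a p] mult_chain[OF b p] mult_rep[OF a p] ra hH])
    qed
    have "normalize (z h) = normalize (w h)"
      by (rule multiplicity_eq_imp_eq[OF z_nz[OF a hH] z_nz[OF b hH]]) (rule mult)
    then have abs_eq: "\<bar>z h\<bar> = \<bar>w h\<bar>" by simp
    have sg: "sgn (z h) = sgn (w h)"
    proof (cases "s n h = 1")
      case True
      then obtain j where j: "j \<in> {1..n}" "h = 2^(j-1)" using s1_iff[OF hH] by blast
      have "sgn (z h) = sgn (Yf n z j)" using sgn_Yf[OF a j(1)] j(2) by simp
      also have "\<dots> = sgn (Yf n w j)" using Y[OF j(1)] by simp
      also have "\<dots> = sgn (w h)" using sgn_Yf[OF b j(1)] j(2) by simp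
      finally show ?thesis .
    next
      case False
      then have "s n h > 1" using s_ge1[OF hH] by simp
      then have "z h > 0" "w h > 0" using a b hH unfolding A0_pre_def by auto
      then show ?thesis by simp
    qed
    have "z h = sgn (z h) * \<bar>z h\<bar>" by (simp add: sgn_mult_abs)
    also have "\<dots> = sgn (w h) * \<bar>w h\<bar>" using sg abs_eq by simp
    also have "\<dots> = w h" by (simp add: sgn_mult_abs)
    finally show ?thesis .
  qed
  then have zw': "z = w" by blast
  have "x' i = x'' i" for i
  proof (cases "i \<in> {1..n}")
    case False
    then show ?thesis using a b unfolding A0_pre_def by simp
  next
    case True
    have nz: "z (2^(i-1)) \<noteq> 0" using z_nz[OF a pow_in_H[OF True]] .
    have "z (2^(i-1)) * x' i = z (2^(i-1)) * x'' i" using X[OF True] zw' by simp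
    then show ?thesis using nz by simp
  qed
  then show ?thesis using zw' by blast
qed

lemma val_lemma:
  fixes x y :: "nat \<Rightarrow> int"
  assumes fin: "finite I" and i: "i \<in> I" and ynz: "\<forall>j\<in>I. y j \<noteq> 0"
    and eq: "(\<Sum>k\<in>I. x k * (\<Prod>j\<in>I-{k}. y j)) = 0" and p: "prime p"
    and dom: "\<forall>j\<in>I-{i}. multiplicity p (y j) + e \<le> multiplicity p (y i)"
  shows "p^e dvd x i"
proof (cases "x i = 0")
  case True
  then show ?thesis by simp
next
  case xnz: False
  define m where "m j = multiplicity p (y j)" for j
  have pe: "prime_elem p" using p by (rule prime_imp_prime_elem)
  have nu: "\<not> is_unit p" using p not_prime_unit by blast
  have mprod: "multiplicity p (\<Prod>j\<in>J. y j) = (\<Sum>j\<in>J. m j)" if J: "J \<subseteq> I" for J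
  proof -
    have "finite J" using J fin finite_subset by blast
    moreover have "0 \<notin> y ` J" using J ynz by force
    ultimately show ?thesis unfolding m_def using pe by (intro prime_elem_multiplicity_prod_distrib) auto
  qed
  define Q where "Q = (\<Prod>j\<in>I-{i}. y j)"
  define A where "A = (\<Sum>j\<in>I-{i}. m j)"
  have Qnz: "Q \<noteq> 0" unfolding Q_def using ynz fin by (subst prod_zero_iff) auto
  have QA: "multiplicity p Q = A" unfolding Q_def A_def by (rule mprod) blast
  have term_dvd: "p^(A+e) dvd x k * (\<Prod>j\<in>I-{k}. y j)" if k: "k \<in> I-{i}" for k
  proof -
    have s1: "(\<Sum>j\<in>I-{k}. m j) = m i + (\<Sum>j\<in>I-{k}-{i}. m j)"
      using fin i k by (intro sum.remove) auto
    have s2: "A = m k + (\<Sum>j\<in>I-{i}-{k}. m j)"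
      unfolding A_def using fin i k by (intro sum.remove) auto
    have s3: "I-{k}-{i} = I-{i}-{k}" by blast
    have "m k + e \<le> m i" using dom k unfolding m_def by blast
    then have "A + e \<le> (\<Sum>j\<in>I-{k}. m j)" using s1 s2 s3 by simp
    also have "\<dots> = multiplicity p (\<Prod>j\<in>I-{k}. y j)" by (rule mprod[symmetric]) blast
    finally have "p^(A+e) dvd (\<Prod>j\<in>I-{k}. y j)" by (rule multiplicity_dvd')
    then show ?thesis by (rule dvd_mult)
  qed
  have "p^(A+e) dvd (\<Sum>k\<in>I-{i}. x k * (\<Prod>j\<in>I-{k}. y j))"
    using term_dvd by (intro dvd_sum) auto
  moreover have "x i * Q + (\<Sum>k\<in>I-{i}. x k * (\<Prod>j\<in>I-{k}. y j)) = 0"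
    using eq sum.remove[OF fin i, of "\<lambda>k. x k * (\<Prod>j\<in>I-{k}. y j)"] unfolding Q_def by simp
  ultimately have "p^(A+e) dvd x i * Q"
    by (metis add.commute add_eq_0_iff dvd_minus_iff)
  moreover have xQ: "x i * Q \<noteq> 0" using xnz Qnz by simp
  ultimately have "A + e \<le> multiplicity p (x i * Q)"
    using multiplicity_geI[OF xQ nu] by blast
  also have "\<dots> = multiplicity p (x i) + A"
    using prime_elem_multiplicity_mult_distrib[OF pe xnz Qnz] QA by simp
  finally have "e \<le> multiplicity p (x i)" by simp
  then show ?thesis by (rule multiplicity_dvd')
qed

lemma phi_surj:
  assumes n: "n \<ge> 2" and B: "(x, y) \<in> B n"
  shows "\<exists>x' z. A0_pre n x' z \<and> A0_gcd n x' z \<and> phi n (x', z) = (x, y)"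
proof -
  let ?I = "{1..n}"
  let ?H = "{1..(2::nat)^n-1}"
  have n1: "n \<ge> 1" using n by simp
  have xo: "\<forall>i. i \<notin> ?I \<longrightarrow> x i = 0 \<and> y i = 0" and yp: "(\<Prod>i\<in>?I. y i) \<noteq> 0"
    and eq: "(\<Sum>i\<in>?I. x i * (\<Prod>j\<in>?I - {i}. y j)) = 0" and g: "Gcd (x ` ?I \<union> y ` ?I) = 1"
    using B unfolding B_def by auto
  have ynz: "\<forall>j\<in>?I. y j \<noteq> 0"
  proof
    fix j assume j: "j \<in> ?I"
    show "y j \<noteq> 0"
    proof
      assume "y j = 0"
      then have "(\<Prod>i\<in>?I. y i) = 0" using j by (intro prod_zero) auto
      then show False using yp by simp
    qed
  qed
  have "\<forall>p. \<exists>u. prime p \<longrightarrow> chainf ?H (bits n) u \<and> repf ?H (bits n) ?I u (\<lambda>i. multiplicity p (y i))"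
    using exist[OF good_bits surj_bits] by blast
  from choice[OF this] obtain U where
    U0: "\<forall>p. prime p \<longrightarrow> chainf ?H (bits n) (U p) \<and> repf ?H (bits n) ?I (U p) (\<lambda>i. multiplicity p (y i))"
    by blast
  have Uc: "chainf ?H (bits n) (U p)" and Ur: "repf ?H (bits n) ?I (U p) (\<lambda>i. multiplicity p (y i))"
    if "prime p" for p using U0 that by blast+
  define P where "P = prime_factors (\<Prod>i\<in>?I. y i)"
  define w where "w h = (\<Prod>p\<in>P. p ^ U p h)" for h :: nat
  define sg where "sg h = (\<Prod>j\<in>{j\<in>?I. h = 2^(j-1)}. sgn (y j))" for h :: nat
  define z where "z h = (if h \<in> ?H then sg h * w h else 0)" for h :: nat
  have Pfin: "finite P" unfolding P_def by simp
  have Pprime: "prime p" if "p \<in> P" for p using that unfolding P_def by auto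
  have wpos: "w h > 0" for h
    unfolding w_def using Pprime prime_gt_0_int by (intro prod_pos) auto
  have Uz: "U q h = 0" if q: "prime q" "q \<notin> P" and hH: "h \<in> ?H" for q h
  proof -
    have "\<forall>i\<in>?I. multiplicity q (y i) = 0"
    proof
      fix i assume i: "i \<in> ?I"
      show "multiplicity q (y i) = 0"
      proof (rule ccontr)
        assume "multiplicity q (y i) \<noteq> 0"
        then have "q dvd y i" using mult_pos_dvd by auto
        moreover have "y i dvd (\<Prod>i\<in>?I. y i)" using i by (intro dvd_prodI) auto
        ultimately have "q dvd (\<Prod>i\<in>?I. y i)" by (rule dvd_trans)
        then have "q \<in> P" unfolding P_def using yp q(1) by (simp add: in_prime_factors_iff)
        then show False using q(2) by simp
      qed
    qed
    then show "U q h = 0" using rep_zero[OF good_bits Ur[OF q(1)] _ hH] by blast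
  qed
  have multw: "multiplicity q (w h) = U q h" if q: "prime q" and hH: "h \<in> ?H" for q h
  proof -
    have "multiplicity q (w h) = (if q \<in> P then U q h else 0)"
      unfolding w_def by (rule multiplicity_prod_prime_powers[OF Pfin Pprime q])
    then show ?thesis using Uz[OF q _ hH] by (cases "q \<in> P") auto
  qed
  have sgabs: "\<bar>sg h\<bar> = 1" for h
  proof -
    have "\<bar>sg h\<bar> = (\<Prod>j\<in>{j\<in>?I. h = 2^(j-1)}. \<bar>sgn (y j)\<bar>)" unfolding sg_def by (rule abs_prod)
    also have "\<dots> = 1"
    proof (intro prod.neutral ballI)
      fix j assume "j \<in> {j\<in>?I. h = 2^(j-1)}"
      then have "y j \<noteq> 0" using ynz by blast
      then show "\<bar>sgn (y j)\<bar> = 1" by (simp add: abs_sgn)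
    qed
    finally show ?thesis .
  qed
  have absz: "\<bar>z h\<bar> = w h" if hH: "h \<in> ?H" for h
    using hH sgabs[of h] wpos[of h] unfolding z_def by (simp add: abs_mult)
  have znz: "z h \<noteq> 0" if hH: "h \<in> ?H" for h
    using absz[OF hH] wpos[of h] by auto
  have multz: "multiplicity q (z h) = U q h" if q: "prime q" and hH: "h \<in> ?H" for q h
  proof -
    have "multiplicity q (z h) = multiplicity q (normalize (z h))" by (rule multiplicity_normalize_right[symmetric])
    also have "normalize (z h) = w h" using absz[OF hH] by simp
    finally show ?thesis using multw[OF q hH] by simp
  qed
  have sg1: "sg h = 1" if hH: "h \<in> ?H" and s1: "s n h \<noteq> 1" for h
  proof -
    have e: "{j\<in>?I. h = 2^(j-1)} = {}"
    proof (rule ccontr)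
      assume "{j\<in>?I. h = 2^(j-1)} \<noteq> {}"
      then obtain j where "j \<in> ?I" "h = 2^(j-1)" by blast
      then have "s n h = 1" using s1_iff[OF hH] by blast
      then show False using s1 by simp
    qed
    show ?thesis unfolding sg_def e by simp
  qed
  have Yfz: "Yf n z i = y i" if i: "i \<in> ?I" for i
  proof -
    let ?A = "{h\<in>?H. i \<in> bits n h}"
    have fA: "finite ?A" by simp
    have hi: "2^(i-1) \<in> ?A" using pow_in_H[OF i] bits_pow[OF i] by simp
    have "Yf n z i = (\<Prod>h\<in>?A. sg h * w h)" unfolding Yf_def z_def by (intro prod.cong) auto
    also have "\<dots> = (\<Prod>h\<in>?A. sg h) * (\<Prod>h\<in>?A. w h)" by (rule prod.distrib)
    also have "(\<Prod>h\<in>?A. sg h) = sgn (y i)"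
    proof -
      have "sg h = (if h = 2^(i-1) then sgn (y i) else 1)" if h: "h \<in> ?A" for h
      proof -
        have jj: "j = i" if j: "j \<in> ?I" "h = 2^(j-1)" for j
        proof -
          have "bits n h = {j}" unfolding j(2) by (rule bits_pow[OF j(1)])
          then show "j = i" using h by simp
        qed
        show ?thesis
        proof (cases "h = 2^(i-1)")
          case True
          have "{j\<in>?I. h = 2^(j-1)} = {i}"
          proof
            show "{j\<in>?I. h = 2^(j-1)} \<subseteq> {i}" using jj by blast
            show "{i} \<subseteq> {j\<in>?I. h = 2^(j-1)}" using i True by blast
          qed
          then have e: "{j\<in>?I. h = 2^(j-1)} = {i}" .
          show ?thesis unfolding sg_def e using True by simp
        next
          case False
          have e: "{j\<in>?I. h = 2^(j-1)} = {}"
          proof (rule ccontr)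
            assume "{j\<in>?I. h = 2^(j-1)} \<noteq> {}"
            then obtain j where j: "j \<in> ?I" "h = 2^(j-1)" by blast
            then have "j = i" by (rule jj)
            then show False using j(2) False by simp
          qed
          show ?thesis unfolding sg_def e using False by simp
        qed
      qed
      then have "(\<Prod>h\<in>?A. sg h) = (\<Prod>h\<in>?A. if h = 2^(i-1) then sgn (y i) else 1)"
        by (intro prod.cong) auto
      also have "\<dots> = sgn (y i)" using hi fA by simp
      finally show ?thesis .
    qed
    also have "(\<Prod>h\<in>?A. w h) = \<bar>y i\<bar>"
    proof -
      have wA: "(\<Prod>h\<in>?A. w h) > 0" using wpos by (intro prod_pos) auto
      have "normalize (\<Prod>h\<in>?A. w h) = normalize (y i)"
      proof (rule multiplicity_eq_imp_eq)
        show "(\<Prod>h\<in>?A. w h) \<noteq> 0" using less_imp_neq[OF wA] by (rule not_sym)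
        show "y i \<noteq> 0" using ynz i by blast
        fix q :: int assume q: "prime q"
        have w0: "0 \<notin> w ` ?A" using wpos by (metis imageE less_irrefl)
        have "multiplicity q (\<Prod>h\<in>?A. w h) = (\<Sum>h\<in>?A. multiplicity q (w h))"
          by (rule prime_elem_multiplicity_prod_distrib[OF prime_imp_prime_elem[OF q] w0 fA])
        also have "\<dots> = (\<Sum>h\<in>?A. U q h)" using multw q by (intro sum.cong) auto
        also have "\<dots> = multiplicity q (y i)" using Ur[OF q] i unfolding repf_def by simp
        finally show "multiplicity q (\<Prod>h\<in>?A. w h) = multiplicity q (y i)" .
      qed
      then show ?thesis using wA by simp
    qed
    finally show "Yf n z i = y i" by (simp add: sgn_mult_abs)
  qed
  have dvdx: "z (2^(i-1)) dvd x i" if i: "i \<in> ?I" for i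
  proof -
    have tH: "(2::nat)^(i-1) \<in> ?H" by (rule pow_in_H[OF i])
    show ?thesis
    proof (cases "x i = 0")
      case True
      then show ?thesis by simp
    next
      case xnz: False
      show ?thesis
      proof (rule multiplicity_le_imp_dvd[OF znz[OF tH]])
        fix q :: int assume q: "prime q"
        have nu: "\<not> is_unit q" using q not_prime_unit by blast
        show "multiplicity q (z (2^(i-1))) \<le> multiplicity q (x i)"
        proof (cases "U q (2^(i-1)) = 0")
          case True
          then show ?thesis using multz[OF q tH] by simp
        next
          case False
          then have pos: "0 < U q (2^(i-1))" by simp
          have dom: "\<forall>j\<in>?I-{i}. multiplicity q (y j) + U q (2^(i-1)) \<le> multiplicity q (y i)"
            using dom_lemma[OF good_bits Uc[OF q] Ur[OF q] tH bits_pow[OF i] pos] by blast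
          have "q ^ U q (2^(i-1)) dvd x i"
            by (rule val_lemma[OF _ i ynz eq q dom]) simp
          then have "U q (2^(i-1)) \<le> multiplicity q (x i)" using multiplicity_geI[OF xnz nu] by blast
          then show ?thesis using multz[OF q tH] by simp
        qed
      qed
    qed
  qed
  define x' where "x' i = (if i \<in> ?I then x i div z (2^(i-1)) else 0)" for i
  have fst_eq: "z (2^(i-1)) * x' i = x i" if i: "i \<in> ?I" for i
    using dvdx[OF i] i unfolding x'_def by simp
  have phieq: "phi n (x', z) = (x, y)"
  proof -
    have f: "fst (phi n (x', z)) = x"
    proof
      fix i show "fst (phi n (x', z)) i = x i"
        unfolding phi_fst using fst_eq xo by (cases "i \<in> ?I") auto
    qed
    have s: "snd (phi n (x', z)) = y"
    proof
      fix i show "snd (phi n (x', z)) i = y i"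
        unfolding phi_snd using Yfz xo by (cases "i \<in> ?I") auto
    qed
    show ?thesis using f s by (simp add: prod_eq_iff)
  qed
  have red: "reduced n z" unfolding reduced_def
  proof (intro ballI impI)
    fix h l assume hH: "h \<in> ?H" and lH: "l \<in> ?H" and nb: "\<not> bprec n h l \<and> \<not> bprec n l h"
    show "gcd (z h) (z l) = 1"
    proof (rule ccontr)
      assume ne: "gcd (z h) (z l) \<noteq> 1"
      have gnz: "gcd (z h) (z l) \<noteq> 0" using znz[OF hH] by simp
      have gnu: "\<not> is_unit (gcd (z h) (z l))"
      proof
        assume "is_unit (gcd (z h) (z l))"
        then have "normalize (gcd (z h) (z l)) = 1" by (rule is_unit_normalize)
        then show False using ne by simp
      qed
      obtain q where q: "q dvd gcd (z h) (z l)" "prime q" using prime_divisor_exists[OF gnz gnu] by blast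
      have nu: "\<not> is_unit q" using q(2) not_prime_unit by blast
      have qh: "q dvd z h" using q(1) dvd_trans gcd_dvd1 by blast
      have ql: "q dvd z l" using q(1) dvd_trans gcd_dvd2 by blast
      have "0 < multiplicity q (z h)" using multiplicity_gt_zero_iff[OF znz[OF hH] nu] qh by blast
      then have uh: "0 < U q h" using multz[OF q(2) hH] by simp
      have "0 < multiplicity q (z l)" using multiplicity_gt_zero_iff[OF znz[OF lH] nu] ql by blast
      then have ul: "0 < U q l" using multz[OF q(2) lH] by simp
      have "bits n h \<subseteq> bits n l \<or> bits n l \<subseteq> bits n h"
        using Uc[OF q(2)] hH lH uh ul unfolding chainf_def by blast
      then show False using nb unfolding bprec_iff by blast
    qed
  qed
  have sum0: "(\<Sum>i\<in>?I. x' i * (\<Prod>h\<in>{h\<in>?H. h \<noteq> 2^n-1 \<and> s n h \<ge> 2}. z h ^ (1 - eps i h))) = 0"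
  proof -
    have L: "(\<Sum>i\<in>?I. (z (2^(i-1)) * x' i) * (\<Prod>j\<in>?I-{i}. Yf n z j))
        = (\<Sum>i\<in>?I. x i * (\<Prod>j\<in>?I - {i}. y j))"
    proof (intro sum.cong refl)
      fix i assume i: "i \<in> ?I"
      have "(\<Prod>j\<in>?I-{i}. Yf n z j) = (\<Prod>j\<in>?I-{i}. y j)"
        using Yfz by (intro prod.cong refl) blast
      then show "(z (2^(i-1)) * x' i) * (\<Prod>j\<in>?I-{i}. Yf n z j) = x i * (\<Prod>j\<in>?I - {i}. y j)"
        using fst_eq[OF i] by simp
    qed
    let ?C = "(\<Prod>h\<in>?H. z h ^ Ef n h)"
    let ?S = "(\<Sum>i\<in>?I. x' i * (\<Prod>h\<in>{h\<in>?H. h \<noteq> 2^n-1 \<and> s n h \<ge> 2}. z h ^ (1 - eps i h)))"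
    from L have "?C * ?S = 0"
      using sum_ident[OF n, of z x'] eq by simp
    then have "?C = 0 \<or> ?S = 0" by (simp only: mult_eq_0_iff)
    moreover have "?C \<noteq> 0"
      using znz by (subst prod_zero_iff) auto
    ultimately show ?thesis by blast
  qed
  have pos: "\<forall>h\<in>?H. s n h > 1 \<longrightarrow> z h > 0"
  proof (intro ballI impI)
    fix h assume hH: "h \<in> ?H" and "s n h > 1"
    then have "sg h = 1" using sg1 by simp
    then show "z h > 0" using hH wpos[of h] unfolding z_def by simp
  qed
  have A0p: "A0_pre n x' z"
    unfolding A0_pre_def using pos znz sum0 red by (auto simp: x'_def z_def)
  have "(\<lambda>i. z (2^(i-1)) * x' i) ` ?I \<union> Yf n z ` ?I = x ` ?I \<union> y ` ?I"
    using fst_eq Yfz by (auto simp: image_def)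
  then have "A0_gcd n x' z" using gcd_equiv[OF n1 A0p] g by simp
  then show ?thesis using A0p phieq by blast
qed

lemma img_phi: "fst (phi n (x', z)) ` {1..n} \<union> snd (phi n (x', z)) ` {1..n}
   = (\<lambda>i. z (2^(i-1)) * x' i) ` {1..n} \<union> Yf n z ` {1..n}"
  unfolding phi_fst phi_snd by auto

lemma phi_into:
  assumes n: "n \<ge> 2" and a: "A0_pre n x' z" and g: "A0_gcd n x' z"
  shows "phi n (x', z) \<in> B n"
proof -
  have n1: "n \<ge> 1" using n by simp
  let ?X = "fst (phi n (x', z))"
  let ?Y = "snd (phi n (x', z))"
  have c1: "\<forall>i. i \<notin> {1..n} \<longrightarrow> ?X i = 0 \<and> ?Y i = 0" unfolding phi_fst phi_snd by simp
  have pY: "(\<Prod>i\<in>{1..n}. ?Y i) = (\<Prod>i\<in>{1..n}. Yf n z i)" unfolding phi_snd by (intro prod.cong) auto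
  have c2: "(\<Prod>i\<in>{1..n}. ?Y i) \<noteq> 0" unfolding pY using Yf_nz[OF a] by (subst prod_zero_iff) auto
  have "(\<Sum>i\<in>{1..n}. ?X i * (\<Prod>j\<in>{1..n} - {i}. ?Y j))
      = (\<Sum>i\<in>{1..n}. (z (2^(i-1)) * x' i) * (\<Prod>j\<in>{1..n}-{i}. Yf n z j))"
  proof (intro sum.cong refl)
    fix i assume i: "i \<in> {1..n}"
    have "(\<Prod>j\<in>{1..n} - {i}. ?Y j) = (\<Prod>j\<in>{1..n}-{i}. Yf n z j)"
      unfolding phi_snd by (intro prod.cong) auto
    then show "?X i * (\<Prod>j\<in>{1..n} - {i}. ?Y j) = (z (2^(i-1)) * x' i) * (\<Prod>j\<in>{1..n}-{i}. Yf n z j)"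
      using i unfolding phi_fst by simp
  qed
  also have "\<dots> = (\<Prod>h\<in>{1..2^n-1}. z h ^ Ef n h) *
         (\<Sum>i\<in>{1..n}. x' i * (\<Prod>h\<in>{h\<in>{1..2^n-1}. h \<noteq> 2^n-1 \<and> s n h \<ge> 2}. z h ^ (1 - eps i h)))"
    by (rule sum_ident[OF n])
  also have "(\<Sum>i\<in>{1..n}. x' i * (\<Prod>h\<in>{h\<in>{1..2^n-1}. h \<noteq> 2^n-1 \<and> s n h \<ge> 2}. z h ^ (1 - eps i h))) = 0"
    using a unfolding A0_pre_def by blast
  finally have c3: "(\<Sum>i\<in>{1..n}. ?X i * (\<Prod>j\<in>{1..n} - {i}. ?Y j)) = 0" by simp
  have c4: "Gcd (?X ` {1..n} \<union> ?Y ` {1..n}) = 1"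
    unfolding img_phi using gcd_equiv[OF n1 a] g by simp
  have "(?X, ?Y) \<in> B n" unfolding B_def mem_Collect_eq prod.case using c1 c2 c3 c4 by blast
  moreover have "phi n (x', z) = (?X, ?Y)" by simp
  ultimately show ?thesis by (simp only:)
qed

theorem proposition5:
  fixes n :: nat
  assumes "n \<ge> 3"
  shows "bij_betw (phi n) (A0 n) (B n) \<and>
    (\<forall>x' z. A0_pre n x' z \<longrightarrow>
       (A0_gcd n x' z \<longleftrightarrow>
          Gcd (fst (phi n (x', z)) ` {1..n} \<union> snd (phi n (x', z)) ` {1..n}) = 1))"
proof
  have n2: "n \<ge> 2" and n1: "n \<ge> 1" using assms by auto
  show "bij_betw (phi n) (A0 n) (B n)"
    unfolding bij_betw_def
  proof
    show "inj_on (phi n) (A0 n)"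
    proof (rule inj_onI)
      fix p q assume p: "p \<in> A0 n" and q: "q \<in> A0 n" and e: "phi n p = phi n q"
      obtain x' z where pp: "p = (x', z)" by (cases p)
      obtain x'' w where qq: "q = (x'', w)" by (cases q)
      have "A0_pre n x' z" using p pp unfolding A0_def by simp
      moreover have "A0_pre n x'' w" using q qq unfolding A0_def by simp
      ultimately have "x' = x'' \<and> z = w" using phi_inj[OF n1] e pp qq by blast
      then show "p = q" using pp qq by simp
    qed
    show "phi n ` A0 n = B n"
    proof
      show "phi n ` A0 n \<subseteq> B n"
      proof
        fix r assume "r \<in> phi n ` A0 n"
        then obtain p where p: "p \<in> A0 n" "r = phi n p" by blast
        obtain x' z where pp: "p = (x', z)" by (cases p)
        have "A0_pre n x' z" "A0_gcd n x' z" using p(1) pp unfolding A0_def by auto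
        then show "r \<in> B n" using phi_into[OF n2] p(2) pp by simp
      qed
      show "B n \<subseteq> phi n ` A0 n"
      proof
        fix r assume r: "r \<in> B n"
        obtain x y where rr: "r = (x, y)" by (cases r)
        obtain x' z where "A0_pre n x' z" "A0_gcd n x' z" "phi n (x', z) = (x, y)"
          using phi_surj[OF n2] r rr by blast
        then show "r \<in> phi n ` A0 n" using rr unfolding A0_def by force
      qed
    qed
  qed
next
  have n1: "n \<ge> 1" using assms by auto
  show "\<forall>x' z. A0_pre n x' z \<longrightarrow>
       (A0_gcd n x' z \<longleftrightarrow>
          Gcd (fst (phi n (x', z)) ` {1..n} \<union> snd (phi n (x', z)) ` {1..n}) = 1)"
    unfolding img_phi using gcd_equiv[OF n1] by blast
qed

end
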